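(* For every positive integer $R$ prime to $p$, \[ D_R-S_R=\Delta_R^{(p)}\big(I-(S_R+I)A_R\big)+(\Theta_R-I)^{(p)}S_RA_R+S_R(A_R-I). \]
   Context: Let $p$ be a prime and $K$ a complete discrete valuation field of characteristic $p$ with algebraically closed residue field $k$, normalized valuation $v_K$. Fix $t\in K$ with $v_K(t)=-1$; every $x\in K$ is uniquely $\sum_{l\ge v_K(x)}x_lt^{-l}$ with $x_l\in k$, and $\mathrm{coef}_{K,l}(x)=x_l$. $UT_n(F)$ (resp. $NT_n(F)$) denotes upper triangular $n\times n$ matrices over $F$ with diagonal entries $1$ (resp. $0$); $X^{(p^m)}$ raises every entry of $X$ to the $p^m$-th power. For $X=(x_{i,j})\in UT_n(K)$ put $v_K(X)=\min_{i<j}v_K(x_{i,j})/(j-i)$. Let $n\ge2$ and $L/K$ a totally wildly ramified finite Galois extension with $\mathrm{Gal}(L/K)\cong UT_n(\mathbb F_p)$. Fix $A=(a_{i,j})\in UT_n(K)$ with $\mathrm{coef}_{K,l}(a_{i,j})=0$ for all $i<j$ and $l\in p\mathbb Z\cup\mathbb Z_{\ge0}$, such that $X^{(p)}A=X$ has a solution $\Theta\in UT_n(L)$ whose entries generate $L$ over $K$; fix such $\Theta$. Put $m_A=-v_K(A)$, fix an integer $N>\log_p\big(n(p^{n(n-1)/2}+1)m_A+p\big)+\frac{n(n-1)}2$ and $q=p^N$. For a positive integer $R$ prime to $p$ let $K_R=K(T)$ with $T^q+T^{q-1}=t^R$. Let $t_R\in\overline K$ be the $qR$-th root of $t^R(1+T^{-1})^{-1}$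 congruent to $t^{1/q}$ modulo $t^{1/q}\mathfrak m_{\overline K}$ (so $t_R\in K_R$). Let $\iota_R:K\to K_R$ be the ring isomorphism $\sum_lx_lt^{-l}\mapsto\sum_lx_l^{1/q}t_R^{-l}$, extended to an isomorphism $K_{sep}\to K_{R,sep}=K_{sep}$ and applied entrywise to matrices; $P(x)=x^p-x$ entrywise. Put $A_R=\iota_R(A)$, $\Theta_R=\iota_R(\Theta)$, $W_{R,0}=I$, $W_{R,e}=A_R^{(p^{e-1})}W_{R,e-1}$ ($1\le e\le N$), $\Delta_R=\Theta_R-\Theta W_{R,N}$, $D_R=P(\Delta_R)$, and $S_R=(W_{R,N}^{(p)})^{-1}AW_{R,N-1}^{(p)}-I\in NT_n(K_R)$. *)

theory Defs
  imports Complex_Main "HOL-Computational_Algebra.Polynomial" "Jordan_Normal_Form.Matrix"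
begin

section \<open>Fields and valuations inside an ambient field (playing the role of an algebraic closure)\<close>

definition is_subfield :: "'a::field set \<Rightarrow> bool" where
  "is_subfield F \<longleftrightarrow> 0 \<in> F \<and> 1 \<in> F \<and>
     (\<forall>x\<in>F. \<forall>y\<in>F. x + y \<in> F \<and> x - y \<in> F \<and> x * y \<in> F) \<and>
     (\<forall>x\<in>F. x \<noteq> 0 \<longrightarrow> inverse x \<in> F)"

definition gen_field :: "'a::field set \<Rightarrow> 'a set" where
  "gen_field S = \<Inter>{F. is_subfield F \<and> S \<subseteq> F}"

definition alg_closed_field :: "'a::field itself \<Rightarrow> bool" where
  "alg_closed_field _ \<longleftrightarrow> (\<forall>f::'a poly. degree f \<ge> 1 \<longrightarrow> (\<exists>x. poly f x = 0))"

definition alg_closed_subfield :: "'a::field set \<Rightarrow> bool" where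
  "alg_closed_subfield F \<longleftrightarrow> is_subfield F \<and>
     (\<forall>f::'a poly. (\<forall>i. coeff f i \<in> F) \<longrightarrow> degree f \<ge> 1 \<longrightarrow> (\<exists>x\<in>F. poly f x = 0))"

definition algebraic_over :: "'a::field set \<Rightarrow> 'a \<Rightarrow> bool" where
  "algebraic_over F x \<longleftrightarrow> (\<exists>f::'a poly. f \<noteq> 0 \<and> (\<forall>i. coeff f i \<in> F) \<and> poly f x = 0)"

definition separable_over :: "'a::field set \<Rightarrow> 'a \<Rightarrow> bool" where
  "separable_over F x \<longleftrightarrow> (\<exists>f::'a poly. f \<noteq> 0 \<and> (\<forall>i. coeff f i \<in> F) \<and> coprime f (pderiv f)
      \<and> poly f x = 0)"

definition sep_closure :: "'a::field set \<Rightarrow> 'a set" where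
  "sep_closure F = {x. separable_over F x}"

text \<open>A (rank one, rational valued) valuation on the ambient field; the value at 0 is irrelevant.\<close>
definition is_valuation :: "('a::field \<Rightarrow> rat) \<Rightarrow> bool" where
  "is_valuation w \<longleftrightarrow>
     (\<forall>x y. x \<noteq> 0 \<longrightarrow> y \<noteq> 0 \<longrightarrow> w (x * y) = w x + w y) \<and>
     (\<forall>x y. x \<noteq> 0 \<longrightarrow> y \<noteq> 0 \<longrightarrow> x + y \<noteq> 0 \<longrightarrow> w (x + y) \<ge> min (w x) (w y))"

text \<open>``valuation of z is at least r'' with the convention w(0) = infinity.\<close>
definition val_ge :: "('a::field \<Rightarrow> rat) \<Rightarrow> 'a \<Rightarrow> rat \<Rightarrow> bool" where
  "val_ge w z r \<longleftrightarrow> z = 0 \<or> w z \<ge> r"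

definition val_gt :: "('a::field \<Rightarrow> rat) \<Rightarrow> 'a \<Rightarrow> rat \<Rightarrow> bool" where
  "val_gt w z r \<longleftrightarrow> z = 0 \<or> w z > r"

definition complete_wrt :: "('a::field \<Rightarrow> rat) \<Rightarrow> 'a set \<Rightarrow> bool" where
  "complete_wrt w K \<longleftrightarrow> (\<forall>s::nat \<Rightarrow> 'a. (\<forall>m. s m \<in> K) \<longrightarrow>
      (\<forall>M::rat. \<exists>N. \<forall>i\<ge>N. \<forall>j\<ge>N. val_ge w (s i - s j) M) \<longrightarrow>
      (\<exists>x\<in>K. \<forall>M::rat. \<exists>N. \<forall>i\<ge>N. val_ge w (s i - x) M))"

definition Gal :: "'a::field set \<Rightarrow> 'a set \<Rightarrow> ('a \<Rightarrow> 'a) set" where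
  "Gal L K = {\<sigma>. bij_betw \<sigma> L L \<and> (\<forall>x\<in>L. \<forall>y\<in>L. \<sigma> (x + y) = \<sigma> x + \<sigma> y \<and> \<sigma> (x * y) = \<sigma> x * \<sigma> y)
                 \<and> (\<forall>x\<in>K. \<sigma> x = x) \<and> (\<forall>x. x \<notin> L \<longrightarrow> \<sigma> x = x)}"

definition finite_galois :: "'a::field set \<Rightarrow> 'a set \<Rightarrow> bool" where
  "finite_galois L K \<longleftrightarrow> is_subfield K \<and> is_subfield L \<and> K \<subseteq> L \<and> L \<subseteq> sep_closure K \<and> finite (Gal L K) \<and>
     {x\<in>L. \<forall>\<sigma>\<in>Gal L K. \<sigma> x = x} = K"

definition UT :: "nat \<Rightarrow> 'a::field set \<Rightarrow> 'a mat set" where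
  "UT n F = {X \<in> carrier_mat n n. (\<forall>i<n. X $$ (i,i) = 1) \<and> (\<forall>i<n. \<forall>j<i. X $$ (i,j) = 0)
                 \<and> (\<forall>i<n. \<forall>j<n. X $$ (i,j) \<in> F)}"

text \<open>UT_n(F_p), realised by integer matrices with entries in {0..<p}, multiplication mod p.\<close>
definition UTp :: "nat \<Rightarrow> nat \<Rightarrow> int mat set" where
  "UTp n p = {X \<in> carrier_mat n n. (\<forall>i<n. X $$ (i,i) = 1) \<and> (\<forall>i<n. \<forall>j<i. X $$ (i,j) = 0)
                 \<and> (\<forall>i<n. \<forall>j<n. X $$ (i,j) \<in> {0..<int p})}"

definition mult_mod :: "nat \<Rightarrow> int mat \<Rightarrow> int mat \<Rightarrow> int mat" where
  "mult_mod p X Y = map_mat (\<lambda>x. x mod int p) (X * Y)"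

definition frob_mat :: "nat \<Rightarrow> 'a::field mat \<Rightarrow> 'a mat" where
  "frob_mat e X = map_mat (\<lambda>x. x ^ e) X"

definition Pmat :: "nat \<Rightarrow> 'a::field mat \<Rightarrow> 'a mat" where
  "Pmat p X = map_mat (\<lambda>x. x ^ p - x) X"

definition inv_mat :: "nat \<Rightarrow> 'a::field mat \<Rightarrow> 'a mat" where
  "inv_mat n X = (THE Y. Y \<in> carrier_mat n n \<and> X * Y = 1\<^sub>m n \<and> Y * X = 1\<^sub>m n)"

definition val_mat :: "('a::field \<Rightarrow> rat) \<Rightarrow> nat \<Rightarrow> 'a mat \<Rightarrow> rat" where
  "val_mat w n X = Min {w (X $$ (i,j)) / of_nat (j - i) | i j. i < j \<and> j < n \<and> X $$ (i,j) \<noteq> 0}"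

fun Wmat :: "nat \<Rightarrow> nat \<Rightarrow> 'a::field mat \<Rightarrow> nat \<Rightarrow> 'a mat" where
  "Wmat n p AR 0 = 1\<^sub>m n"
| "Wmat n p AR (Suc e) = frob_mat (p ^ e) AR * Wmat n p AR e"

text \<open>q-th root (unique in characteristic p when q is a power of p, exists in an algebraically closed field).\<close>
definition root_q :: "nat \<Rightarrow> 'a::field \<Rightarrow> 'a" where
  "root_q q c = (THE y. y ^ q = c)"

end

theory Submission
  imports Defs "Jordan_Normal_Form.Determinant"
begin

lemma frob_add:
  fixes a b :: "'a::comm_ring_1"
  assumes "prime (CHAR('a))"
  shows "(a + b) ^ CHAR('a) = a ^ CHAR('a) + b ^ CHAR('a)"
proof -
  define p where "p = CHAR('a)"
  have pp: "prime p" using assms p_def by simp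
  hence p0: "p \<noteq> 0" by auto
  define g where "g = (\<lambda>k. of_nat (p choose k) * a ^ k * b ^ (p - k))"
  have z: "g k = 0" if "k \<in> {..p} - {0, p}" for k
  proof -
    have "p dvd (p choose k)" using that pp by (intro dvd_choose_prime) auto
    hence "of_nat (p choose k) = (0::'a)" by (simp add: of_nat_eq_0_iff_char_dvd p_def)
    thus ?thesis by (simp add: g_def)
  qed
  have "(a + b) ^ p = (\<Sum>k\<le>p. g k)" by (simp add: binomial_ring g_def)
  also have "\<dots> = (\<Sum>k\<in>{0,p}. g k)"
    by (rule sum.mono_neutral_right) (use z in auto)
  also have "\<dots> = a ^ p + b ^ p" using p0 by (simp add: g_def)
  finally show ?thesis by (simp add: p_def)
qed


context
  fixes p :: nat
  assumes cp: "CHAR('a::field) = p" and pp: "prime p"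
begin

lemma frob_add': "((a::'a) + b) ^ p = a ^ p + b ^ p"
  using frob_add[of a b] cp pp by simp

lemma frob_minus': "((a::'a) - b) ^ p = a ^ p - b ^ p"
proof -
  have "a ^ p = ((a - b) + b) ^ p" by simp
  also have "\<dots> = (a - b) ^ p + b ^ p" by (rule frob_add')
  finally show ?thesis by simp
qed

lemma frob_sum': "(\<Sum>i\<in>S. f i :: 'a) ^ p = (\<Sum>i\<in>S. f i ^ p)"
proof (cases "finite S")
  case True
  then show ?thesis by (induction S rule: finite_induct) (use pp in \<open>auto simp: frob_add' prime_gt_0_nat\<close>)
next
  case False
  then show ?thesis using pp by (simp add: prime_gt_0_nat)
qed

lemma frob_mat_mult:
  assumes "A \<in> carrier_mat nr m" "B \<in> carrier_mat m nc"
  shows "frob_mat p (A * B :: 'a mat) = frob_mat p A * frob_mat p B"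
  by (rule eq_matI) (use assms in \<open>auto simp: frob_mat_def scalar_prod_def frob_sum' power_mult_distrib\<close>)

lemma frob_mat_minus:
  assumes "A \<in> carrier_mat nr nc" "B \<in> carrier_mat nr nc"
  shows "frob_mat p (A - B :: 'a mat) = frob_mat p A - frob_mat p B"
  by (rule eq_matI) (use assms in \<open>auto simp: frob_mat_def frob_minus'\<close>)

lemma frob_mat_one: "frob_mat p (1\<^sub>m n :: 'a mat) = 1\<^sub>m n"
  by (rule eq_matI) (use pp in \<open>auto simp: frob_mat_def prime_gt_0_nat\<close>)

end

lemma frob_mat_carrier[simp]: "frob_mat e X \<in> carrier_mat nr nc \<longleftrightarrow> X \<in> carrier_mat nr nc"
  by (simp add: frob_mat_def)

lemma frob_mat_frob: "frob_mat p (frob_mat (p ^ e) X) = frob_mat (p ^ Suc e) (X :: 'a::field mat)"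
  by (rule eq_matI) (auto simp: frob_mat_def power_mult[symmetric] mult.commute)

lemma Wmat_carrier: "AR \<in> carrier_mat n n \<Longrightarrow> Wmat n p AR e \<in> carrier_mat n n"
  by (induction e) auto

lemma Wmat_step:
  assumes cp: "CHAR('a::field) = p" and pp: "prime p" and AR: "(AR :: 'a mat) \<in> carrier_mat n n"
  shows "frob_mat p (Wmat n p AR e) * AR = Wmat n p AR (Suc e)"
proof (induction e)
  case 0
  have "frob_mat (Suc 0) AR = AR" by (rule eq_matI) (auto simp: frob_mat_def)
  then show ?case using AR frob_mat_one[OF cp pp] by simp
next
  case (Suc e)
  have "frob_mat p (Wmat n p AR (Suc e)) * AR
      = (frob_mat p (frob_mat (p ^ e) AR) * frob_mat p (Wmat n p AR e)) * AR"
    using AR Wmat_carrier[OF AR] frob_mat_mult[OF cp pp, of "frob_mat (p ^ e) AR" n n "Wmat n p AR e" n] by simp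
  also have "\<dots> = frob_mat (p ^ Suc e) AR * (frob_mat p (Wmat n p AR e) * AR)"
    using AR Wmat_carrier[OF AR, of p e] frob_mat_frob[of p e AR]
      assoc_mult_mat[of "frob_mat (p ^ Suc e) AR" n n "frob_mat p (Wmat n p AR e)" n AR n] by simp
  also have "\<dots> = Wmat n p AR (Suc (Suc e))" using Suc by simp
  finally show ?case .
qed

lemma Wmat_det:
  assumes AR: "(AR :: 'a::field mat) \<in> carrier_mat n n" and ut: "upper_triangular AR"
    and dg: "\<forall>i<n. AR $$ (i,i) = 1" and p0: "p > 0"
  shows "det (Wmat n p AR e) = 1"
proof (induction e)
  case 0
  then show ?case by simp
next
  case (Suc e)
  have c: "frob_mat (p ^ e) AR \<in> carrier_mat n n" using AR by simp
  have "upper_triangular (frob_mat (p ^ e) AR)"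
    using ut AR p0 unfolding upper_triangular_def frob_mat_def by auto
  hence "det (frob_mat (p ^ e) AR) = prod_list (diag_mat (frob_mat (p ^ e) AR))"
    using det_upper_triangular c by blast
  also have "\<dots> = 1" unfolding prod_list_diag_prod using AR dg by (simp add: frob_mat_def)
  finally show ?case using Suc det_mult[OF c Wmat_carrier[OF AR]] by simp
qed


definition ents :: "'a set \<Rightarrow> 'a mat \<Rightarrow> bool" where
  "ents F X \<longleftrightarrow> (\<forall>i<dim_row X. \<forall>j<dim_col X. X $$ (i,j) \<in> F)"

context
  fixes F :: "'a::field set" and \<iota> :: "'a \<Rightarrow> 'a"
  assumes sf: "is_subfield F"
    and hom: "\<forall>x\<in>F. \<forall>y\<in>F. \<iota> (x + y) = \<iota> x + \<iota> y \<and> \<iota> (x * y) = \<iota> x * \<iota> y"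
    and one: "\<iota> 1 = 1"
begin

lemma sf0: "0 \<in> F" and sf1: "1 \<in> F"
  and sfadd: "x \<in> F \<Longrightarrow> y \<in> F \<Longrightarrow> x + y \<in> F"
  and sfmult: "x \<in> F \<Longrightarrow> y \<in> F \<Longrightarrow> x * y \<in> F"
  using sf unfolding is_subfield_def by auto

lemma iota0: "\<iota> 0 = 0"
proof -
  have "\<iota> 0 + \<iota> 0 = \<iota> 0 + 0" using hom sf0 by (metis add_0_right)
  thus ?thesis by (rule add_left_imp_eq)
qed

lemma sf_sum: "(\<And>i. i \<in> S \<Longrightarrow> f i \<in> F) \<Longrightarrow> sum f S \<in> F"
proof (induction S rule: infinite_finite_induct)
  case (insert x S) thus ?case by (simp add: sfadd)
qed (auto simp: sf0)

lemma iota_sum: "(\<And>i. i \<in> S \<Longrightarrow> f i \<in> F) \<Longrightarrow> \<iota> (sum f S) = (\<Sum>i\<in>S. \<iota> (f i))"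
proof (induction S rule: infinite_finite_induct)
  case (insert x S)
  have "f x \<in> F" using insert.prems by auto
  moreover have "sum f S \<in> F" by (rule sf_sum) (use insert.prems in auto)
  ultimately show ?case using insert hom by simp
qed (auto simp: iota0)

lemma sf_pow: "x \<in> F \<Longrightarrow> x ^ k \<in> F"
  by (induction k) (auto simp: sf1 sfmult)

lemma iota_pow: "x \<in> F \<Longrightarrow> \<iota> (x ^ k) = \<iota> x ^ k"
  by (induction k) (use hom sf_pow one in auto)

lemma ents_mult: "ents F X \<Longrightarrow> ents F Y \<Longrightarrow> dim_col X = dim_row Y \<Longrightarrow> ents F (X * Y)"
  unfolding ents_def by (auto simp: scalar_prod_def intro!: sf_sum sfmult)

lemma ents_frob: "ents F X \<Longrightarrow> ents F (frob_mat e X)"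
  unfolding ents_def frob_mat_def by (auto intro!: sf_pow)

lemma iota_mult: "ents F X \<Longrightarrow> ents F Y \<Longrightarrow> dim_col X = dim_row Y \<Longrightarrow>
   map_mat \<iota> (X * Y) = map_mat \<iota> X * map_mat \<iota> Y"
proof (rule eq_matI)
  fix i j assume ij: "i < dim_row (map_mat \<iota> X * map_mat \<iota> Y)" "j < dim_col (map_mat \<iota> X * map_mat \<iota> Y)"
  assume X: "ents F X" and Y: "ents F Y" and d: "dim_col X = dim_row Y"
  have e: "\<And>k. k < dim_row Y \<Longrightarrow> X $$ (i,k) \<in> F \<and> Y $$ (k,j) \<in> F"
    using X Y d ij unfolding ents_def by auto
  have "\<iota> (\<Sum>k = 0..<dim_row Y. X $$ (i, k) * Y $$ (k, j)) = (\<Sum>k = 0..<dim_row Y. \<iota> (X $$ (i, k) * Y $$ (k, j)))"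
    by (rule iota_sum) (use e sfmult in auto)
  also have "\<dots> = (\<Sum>k = 0..<dim_row Y. \<iota> (X $$ (i, k)) * \<iota> (Y $$ (k, j)))"
    by (rule sum.cong) (use e hom in auto)
  finally show "map_mat \<iota> (X * Y) $$ (i, j) = (map_mat \<iota> X * map_mat \<iota> Y) $$ (i, j)"
    using ij d by (simp add: scalar_prod_def)
qed auto

lemma iota_frob: "ents F X \<Longrightarrow> map_mat \<iota> (frob_mat e X) = frob_mat e (map_mat \<iota> X)"
  unfolding ents_def frob_mat_def by (rule eq_matI) (auto simp: iota_pow)

end


context
  fixes w :: "'a::field \<Rightarrow> rat"
  assumes wv: "is_valuation w"
begin

lemma w_mult: "x \<noteq> 0 \<Longrightarrow> y \<noteq> 0 \<Longrightarrow> w (x * y) = w x + w y"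
  using wv unfolding is_valuation_def by blast

lemma w_add: "x \<noteq> 0 \<Longrightarrow> y \<noteq> 0 \<Longrightarrow> x + y \<noteq> 0 \<Longrightarrow> w (x + y) \<ge> min (w x) (w y)"
  using wv unfolding is_valuation_def by blast

lemma w_one: "w 1 = 0"
  using w_mult[of 1 1] by simp

lemma w_uminus: "w (- x) = w x"
proof (cases "x = 0")
  case False
  have "w ((-1) * (-1)) = w (-1) + w (-1)" by (rule w_mult) auto
  hence m1: "w (-1) = 0" using w_one by simp
  have "w ((-1) * x) = w (-1) + w x" by (rule w_mult) (use False in auto)
  thus ?thesis using m1 by simp
qed simp

lemma w_diff: "x \<noteq> 0 \<Longrightarrow> y \<noteq> 0 \<Longrightarrow> x - y \<noteq> 0 \<Longrightarrow> w (x - y) \<ge> min (w x) (w y)"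
  using w_add[of x "-y"] w_uminus[of y] by simp

lemma w_pow: "t \<noteq> 0 \<Longrightarrow> w (t ^ m) = of_nat m * w t"
  by (induction m) (auto simp: w_one w_mult algebra_simps)

lemma val_nonpos:
  fixes coef :: "int \<Rightarrow> 'a \<Rightarrow> 'a" and x t :: 'a and L0 :: int
  assumes tnz: "t \<noteq> 0" and wt: "w t = -1"
    and kunit: "\<And>l. coef l x \<noteq> 0 \<Longrightarrow> w (coef l x) = 0"
    and low: "\<forall>l<L0. coef l x = 0"
    and exp: "\<forall>L0 M. (\<forall>l<L0. coef l x = 0) \<longrightarrow>
                     val_ge w (x - (\<Sum>l\<in>{L0..<M}. coef l x * t powi (-l))) (of_int M)"
    and pos: "\<forall>l\<ge>0. coef l x = 0"
    and xnz: "x \<noteq> 0"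
  shows "w x \<le> 0"
proof (rule ccontr)
  assume wpos: "\<not> w x \<le> 0"
  have ex: "\<exists>l. coef l x \<noteq> 0"
  proof (rule ccontr)
    assume "\<not> ?thesis"
    hence z: "\<forall>l. coef l x = 0" by auto
    define M where "M = \<lfloor>w x\<rfloor> + 1"
    have "val_ge w (x - (\<Sum>l\<in>{L0..<M}. coef l x * t powi (-l))) (of_int M)"
      using exp low by blast
    hence "w x \<ge> of_int M" using z xnz by (simp add: val_ge_def)
    thus False unfolding M_def by linarith
  qed
  then obtain l1 where l1: "coef l1 x \<noteq> 0" by blast
  have l1L: "l1 \<ge> L0" using low l1 by (meson not_le)
  define Z where "Z = {m::nat. coef (L0 + int m) x \<noteq> 0}"
  have "nat (l1 - L0) \<in> Z" using l1 l1L by (simp add: Z_def)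
  define m0 where "m0 = (LEAST m. m \<in> Z)"
  have m0Z: "m0 \<in> Z" unfolding m0_def by (rule LeastI) fact
  define l0 where "l0 = L0 + int m0"
  have c0: "coef l0 x \<noteq> 0" using m0Z by (simp add: Z_def l0_def)
  have below: "\<forall>l<l0. coef l x = 0"
  proof (intro allI impI)
    fix l assume "l < l0"
    show "coef l x = 0"
    proof (cases "l < L0")
      case True thus ?thesis using low by auto
    next
      case False
      hence "nat (l - L0) < m0" using \<open>l < l0\<close> by (simp add: l0_def)
      hence "nat (l - L0) \<notin> Z" unfolding m0_def using not_less_Least by blast
      thus ?thesis using False by (simp add: Z_def)
    qed
  qed
  have l0neg: "l0 < 0" using pos c0 by (meson not_le)
  have "val_ge w (x - (\<Sum>l\<in>{l0..<l0+1}. coef l x * t powi (-l))) (of_int (l0+1))"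
    using exp below by blast
  moreover have "{l0..<l0+1} = {l0}" by auto
  ultimately have vg: "val_ge w (x - coef l0 x * t powi (-l0)) (of_int l0 + 1)" by simp
  define m where "m = nat (- l0)"
  have tp: "t powi (-l0) = t ^ m"
    using l0neg by (simp add: m_def power_int_def)
  define y where "y = coef l0 x * t ^ m"
  have tm0: "t ^ m \<noteq> 0" using tnz by simp
  have ynz: "y \<noteq> 0" using c0 tm0 by (simp add: y_def)
  have wy: "w y = of_int l0"
  proof -
    have "w y = w (coef l0 x) + w (t ^ m)" unfolding y_def by (rule w_mult) (use c0 tm0 in auto)
    also have "\<dots> = - of_nat m" using kunit[OF c0] w_pow[OF tnz] wt by simp
    also have "\<dots> = of_int l0" using l0neg by (simp add: m_def)
    finally show ?thesis .
  qed
  show False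
  proof (cases "x - y = 0")
    case True
    hence "x = y" by simp
    thus False using wy wpos l0neg by simp
  next
    case False
    have wz: "w (x - y) \<ge> of_int l0 + 1" using vg False by (simp add: val_ge_def tp y_def)
    have "y = x - (x - y)" by simp
    hence "w y \<ge> min (w x) (w (x - y))" using w_diff[OF xnz False] ynz by simp
    thus False using wy wz wpos l0neg by linarith
  qed
qed

end


lemma fermat_char:
  assumes cp: "CHAR('a::field) = p" and pp: "prime p"
  shows "(of_nat i :: 'a) ^ p = of_nat i"
proof (induction i)
  case 0 thus ?case using pp by (simp add: prime_gt_0_nat)
next
  case (Suc i)
  have "(of_nat (Suc i) :: 'a) ^ p = (of_nat i + 1) ^ p" by (simp add: add.commute)
  also have "\<dots> = of_nat i ^ p + 1 ^ p" by (rule frob_add'[OF cp pp])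
  finally show ?case using Suc by simp
qed

lemma roots_char:
  assumes cp: "CHAR('a::field) = p" and pp: "prime p" and x: "(x::'a) ^ p = x"
  shows "x \<in> of_nat ` {..<p}"
proof -
  have p2: "p \<ge> 2" using pp by (simp add: prime_ge_2_nat)
  define q :: "'a poly" where "q = monom 1 p + (- [:0,1:])"
  have dq: "degree q = p" unfolding q_def using p2
    by (subst degree_add_eq_left) (auto simp: degree_monom_eq)
  hence qnz: "q \<noteq> 0" using p2 by auto
  have pq: "poly q y = y ^ p - y" for y by (simp add: q_def poly_monom)
  have fin: "finite {y. poly q y = 0}" by (rule poly_roots_finite[OF qnz])
  have cb: "card {y. poly q y = 0} \<le> p" using card_poly_roots_bound[OF qnz] dq by simp
  have sub: "of_nat ` {..<p} \<subseteq> {y. poly q y = 0}" using fermat_char[OF cp pp] by (auto simp: pq)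
  have inj: "inj_on (of_nat :: nat \<Rightarrow> 'a) {..<p}"
  proof (rule inj_onI)
    fix i j assume "i \<in> {..<p}" "j \<in> {..<p}" "(of_nat i :: 'a) = of_nat j"
    moreover have "False" if "i < j" "j < p" "(of_nat i :: 'a) = of_nat j" for i j
    proof -
      have "p dvd (j - i)" using of_nat_eq_iff_char_dvd[of i j, where ?'a='a] that cp by simp
      moreover have "j - i < p" "0 < j - i" using that by auto
      ultimately show False using nat_dvd_not_less by blast
    qed
    ultimately show "i = j" by (metis lessThan_iff linorder_neqE_nat)
  qed
  have "card (of_nat ` {..<p} :: 'a set) = p" using card_image[OF inj] by simp
  hence "of_nat ` {..<p} = {y. poly q y = 0}"
    using card_subset_eq[OF fin sub] cb card_mono[OF fin sub] by linarith
  thus ?thesis using x by (simp add: pq)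
qed


lemma subfield_of_nat: "is_subfield K \<Longrightarrow> (of_nat i :: 'a::field) \<in> K"
  by (induction i) (auto simp: is_subfield_def)

lemma gen_field_sub: "is_subfield K \<Longrightarrow> S \<subseteq> K \<Longrightarrow> gen_field S \<subseteq> K"
  unfolding gen_field_def by blast

lemma inv_mat_eq:
  assumes X: "X \<in> carrier_mat n n" and Y: "Y \<in> carrier_mat n n"
    and XY: "X * Y = 1\<^sub>m n" and YX: "Y * X = 1\<^sub>m n"
  shows "inv_mat n X = (Y :: 'a::field mat)"
  unfolding inv_mat_def
proof (rule the_equality)
  fix Z assume Z: "Z \<in> carrier_mat n n \<and> X * Z = 1\<^sub>m n \<and> Z * X = 1\<^sub>m n"
  have "Z = Z * (X * Y)" using Z XY right_mult_one_mat[of Z n n] by simp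
  also have "\<dots> = (Z * X) * Y" using Z X Y assoc_mult_mat[of Z n n X n Y n] by metis
  also have "\<dots> = Y" using Z Y by simp
  finally show "Z = Y" .
qed (use assms in auto)

lemma inv_exists:
  assumes X: "X \<in> carrier_mat n n" and d: "det X \<noteq> (0::'a::field)"
  shows "\<exists>Y. Y \<in> carrier_mat n n \<and> X * Y = 1\<^sub>m n \<and> Y * X = 1\<^sub>m n"
proof -
  have "X \<in> Units (ring_mat TYPE('a) n undefined)" by (rule det_non_zero_imp_unit[OF X d])
  thus ?thesis unfolding Units_def by (auto simp: ring_mat_simps)
qed

theorem lemma13:
  fixes p n N R :: nat
    and K k L :: "'a::field set"
    and w :: "'a \<Rightarrow> rat"
    and t T tR :: 'a
    and coef :: "int \<Rightarrow> 'a \<Rightarrow> 'a"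
    and A \<Theta> :: "'a mat"
    and \<iota> :: "'a \<Rightarrow> 'a"
    and AR \<Theta>R \<Delta>R DR SR :: "'a mat"
    and W :: "nat \<Rightarrow> 'a mat"
  assumes p_prime: "prime p" and char_p: "CHAR('a) = p"
    \<comment> \<open>the ambient field 'a is an algebraic closure of K\<close>
    and alg_closed: "alg_closed_field TYPE('a)"
    and algebraic: "\<forall>x. algebraic_over K x"
    \<comment> \<open>K is a complete discrete valuation field, normalised valuation w restricted to K;
        w is the (unique) extension of v_K to the algebraic closure\<close>
    and K_field: "is_subfield K"
    and w_val: "is_valuation w"
    and w_int: "\<forall>x\<in>K. x \<noteq> 0 \<longrightarrow> w x \<in> \<int>"
    and K_complete: "complete_wrt w K"
    and t_in: "t \<in> K" and t_nz: "t \<noteq> 0" and w_t: "w t = -1"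
    \<comment> \<open>algebraically closed residue field k, embedded as coefficient field\<close>
    and k_sub: "k \<subseteq> K" and k_closed: "alg_closed_subfield k"
    and k_units: "\<forall>c\<in>k. c \<noteq> 0 \<longrightarrow> w c = 0"
    \<comment> \<open>expansions x = sum_l x_l t^(-l), coef l x = x_l\<close>
    and coef_in: "\<forall>x\<in>K. \<forall>l. coef l x \<in> k"
    and coef_low: "\<forall>x\<in>K. \<exists>L0. \<forall>l<L0. coef l x = 0"
    and coef_exp: "\<forall>x\<in>K. \<forall>L0 M. (\<forall>l<L0. coef l x = 0) \<longrightarrow>
                     val_ge w (x - (\<Sum>l\<in>{L0..<M}. coef l x * t powi (-l))) (of_int M)"
    \<comment> \<open>L/K totally wildly ramified finite Galois with group UT_n(F_p)\<close>
    and n_ge: "n \<ge> 2"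
    and L_gal: "finite_galois L K"
    and Gal_iso: "\<exists>\<phi>. bij_betw \<phi> (Gal L K) (UTp n p) \<and>
                   (\<forall>\<sigma>\<in>Gal L K. \<forall>\<tau>\<in>Gal L K. \<phi> (\<sigma> \<circ> \<tau>) = mult_mod p (\<phi> \<sigma>) (\<phi> \<tau>))"
    and tot_ram: "\<exists>\<pi>\<in>L. \<pi> \<noteq> 0 \<and> w \<pi> = 1 / of_nat (card (Gal L K))"
    and wild: "p dvd card (Gal L K)"
    \<comment> \<open>the matrix A and the solution \<Theta>\<close>
    and A_UT: "A \<in> UT n K"
    and A_coef: "\<forall>i j l. i < j \<longrightarrow> j < n \<longrightarrow> (int p dvd l \<or> l \<ge> 0) \<longrightarrow> coef l (A $$ (i,j)) = 0"
    and Theta_UT: "\<Theta> \<in> UT n L"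
    and Theta_eq: "frob_mat p \<Theta> * A = \<Theta>"
    and Theta_gen: "L = gen_field (K \<union> {\<Theta> $$ (i,j) | i j. i < n \<and> j < n})"
    \<comment> \<open>choice of N (q = p^N), with m_A = - v_K(A)\<close>
    and N_big: "real N > log (real p) (real n * (real p ^ (n * (n - 1) div 2) + 1)
                   * real_of_rat (- val_mat w n A) + real p) + real (n * (n - 1) div 2)"
    \<comment> \<open>R, K_R = K(T), t_R\<close>
    and R_pos: "R > 0" and R_coprime: "coprime R p"
    and T_eq: "T ^ (p ^ N) + T ^ (p ^ N - 1) = t ^ R"
    and tR_eq: "tR ^ (p ^ N * R) = t ^ R * inverse (1 + inverse T)"
    and tR_cong: "\<forall>s. s ^ (p ^ N) = t \<longrightarrow> val_gt w (tR - s) (w s)"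
    \<comment> \<open>\<iota>_R: K_sep \<rightarrow> K_sep ring isomorphism extending sum x_l t^(-l) \<mapsto> sum x_l^(1/q) t_R^(-l)\<close>
    and iota_bij: "bij_betw \<iota> (sep_closure K) (sep_closure K)"
    and iota_hom: "\<forall>x\<in>sep_closure K. \<forall>y\<in>sep_closure K.
                     \<iota> (x + y) = \<iota> x + \<iota> y \<and> \<iota> (x * y) = \<iota> x * \<iota> y"
    and iota_one: "\<iota> 1 = 1"
    and iota_K: "\<forall>x\<in>K. \<forall>L0 M. (\<forall>l<L0. coef l x = 0) \<longrightarrow>
                   val_ge w (\<iota> x - (\<Sum>l\<in>{L0..<M}. root_q (p ^ N) (coef l x) * tR powi (-l)))
                     (of_int M / of_nat (p ^ N))"
  defines "AR \<equiv> map_mat \<iota> A"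
    and "\<Theta>R \<equiv> map_mat \<iota> \<Theta>"
    and "W \<equiv> Wmat n p AR"
    and "\<Delta>R \<equiv> \<Theta>R - \<Theta> * W N"
    and "DR \<equiv> Pmat p \<Delta>R"
    and "SR \<equiv> inv_mat n (frob_mat p (W N)) * A * frob_mat p (W (N - 1)) - 1\<^sub>m n"
  shows "DR - SR = frob_mat p \<Delta>R * (1\<^sub>m n - (SR + 1\<^sub>m n) * AR)
                   + frob_mat p (\<Theta>R - 1\<^sub>m n) * SR * AR + SR * (AR - 1\<^sub>m n)"
proof -
  have pp: "prime p" by fact
  have cp: "CHAR('a) = p" by fact
  have p0: "p > 0" using pp prime_gt_0_nat by blast
  have Lsf: "is_subfield L" and KL: "K \<subseteq> L" and Lsep: "L \<subseteq> sep_closure K"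
    using L_gal unfolding finite_galois_def by auto
  have homL: "\<forall>x\<in>L. \<forall>y\<in>L. \<iota> (x + y) = \<iota> x + \<iota> y \<and> \<iota> (x * y) = \<iota> x * \<iota> y"
    using iota_hom Lsep by blast
  have Ac: "A \<in> carrier_mat n n" and Adiag: "\<forall>i<n. A $$ (i,i) = 1"
    and Alow: "\<forall>i<n. \<forall>j<i. A $$ (i,j) = 0" and AK: "\<forall>i<n. \<forall>j<n. A $$ (i,j) \<in> K"
    using A_UT unfolding UT_def by auto
  have Tc: "\<Theta> \<in> carrier_mat n n" and TL: "\<forall>i<n. \<forall>j<n. \<Theta> $$ (i,j) \<in> L"
    using Theta_UT unfolding UT_def by auto
  have entsA: "ents L A" using Ac AK KL unfolding ents_def by auto
  have entsT: "ents L \<Theta>" using Tc TL unfolding ents_def by auto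
  \<comment> \<open>N is positive\<close>
  have offdiag: "\<exists>i j. i < j \<and> j < n \<and> A $$ (i,j) \<noteq> 0"
  proof (rule ccontr)
    assume "\<not> ?thesis"
    hence z: "\<forall>i j. i < j \<longrightarrow> j < n \<longrightarrow> A $$ (i,j) = 0" by auto
    have A1: "A = 1\<^sub>m n"
    proof (rule eq_matI)
      fix i j assume ij: "i < dim_row (1\<^sub>m n)" "j < dim_col (1\<^sub>m n)"
      show "A $$ (i,j) = 1\<^sub>m n $$ (i,j)"
      proof (cases "i = j")
        case True thus ?thesis using Adiag ij by simp
      next
        case False
        thus ?thesis using z Alow ij by (cases "i < j") auto
      qed
    qed (use Ac in auto)
    have TT: "frob_mat p \<Theta> = \<Theta>" using Theta_eq A1 Tc by (simp add: frob_mat_def)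
    have EK: "\<Theta> $$ (i,j) \<in> K" if "i < n" "j < n" for i j
    proof -
      have "\<Theta> $$ (i,j) ^ p = \<Theta> $$ (i,j)"
        using arg_cong[OF TT, of "\<lambda>M. M $$ (i,j)"] that Tc by (simp add: frob_mat_def)
      from roots_char[OF cp pp this] show ?thesis using subfield_of_nat[OF K_field] by auto
    qed
    have "L \<subseteq> K" unfolding Theta_gen by (rule gen_field_sub[OF K_field]) (use EK in auto)
    hence LK: "L = K" using KL by auto
    have G: "Gal L K = {id}"
    proof
      show "Gal L K \<subseteq> {id}"
      proof
        fix \<sigma> assume "\<sigma> \<in> Gal L K"
        hence "\<sigma> x = x" for x unfolding Gal_def using LK by (cases "x \<in> L") auto
        thus "\<sigma> \<in> {id}" by auto
      qed
      show "{id} \<subseteq> Gal L K" unfolding Gal_def by auto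
    qed
    have "p dvd 1" using wild G by simp
    thus False using pp by simp
  qed
  then obtain i0 j0 where ij0: "i0 < j0" "j0 < n" "A $$ (i0,j0) \<noteq> 0" by blast
  define a where "a = A $$ (i0,j0)"
  have aK: "a \<in> K" using AK ij0 a_def by auto
  obtain La where La: "\<forall>l<La. coef l a = 0" using coef_low aK by blast
  have wa: "w a \<le> 0"
  proof (rule val_nonpos[OF w_val t_nz w_t, of coef a La])
    show "\<And>l. coef l a \<noteq> 0 \<Longrightarrow> w (coef l a) = 0" using coef_in k_units aK by blast
    show "\<forall>l<La. coef l a = 0" by fact
    show "\<forall>L0 M. (\<forall>l<L0. coef l a = 0) \<longrightarrow>
        val_ge w (a - (\<Sum>l = L0..<M. coef l a * t powi - l)) (rat_of_int M)"
      using coef_exp aK by blast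
    show "\<forall>l\<ge>0. coef l a = 0" using A_coef ij0 a_def by auto
    show "a \<noteq> 0" using ij0 a_def by auto
  qed
  define VS where "VS = {w (A $$ (i,j)) / of_nat (j - i) | i j. i < j \<and> j < n \<and> A $$ (i,j) \<noteq> 0}"
  have finVS: "finite VS"
  proof -
    have "VS \<subseteq> (\<lambda>(i,j). w (A $$ (i,j)) / of_nat (j - i)) ` ({..<n} \<times> {..<n})"
      unfolding VS_def by auto
    thus ?thesis by (rule finite_subset) auto
  qed
  have inVS: "w a / of_nat (j0 - i0) \<in> VS" unfolding VS_def a_def using ij0 by blast
  have "w a / of_nat (j0 - i0) \<le> 0" using wa ij0 by (simp add: divide_nonpos_pos)
  hence vm: "val_mat w n A \<le> 0" unfolding val_mat_def VS_def[symmetric]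
    using Min_le[OF finVS inVS] by (meson order_trans)
  have N1: "N \<ge> 1"
  proof -
    define X where "X = real n * (real p ^ (n * (n - 1) div 2) + 1) * real_of_rat (- val_mat w n A) + real p"
    have "real_of_rat (- val_mat w n A) \<ge> 0" using vm by (simp add: zero_le_of_rat_iff)
    hence "X \<ge> real p" unfolding X_def by simp
    moreover have p1: "real p > 1" using pp prime_gt_1_nat by simp
    ultimately have "log (real p) X \<ge> log (real p) (real p)"
      by (subst log_le_cancel_iff) auto
    hence lX: "log (real p) X \<ge> 1" using p1 by simp
    have "n * (n - 1) \<ge> 2 * 1" using n_ge by (intro mult_le_mono) auto
    hence "n * (n - 1) div 2 \<ge> 1" by linarith
    hence "real (n * (n - 1) div 2) \<ge> 1" by linarith
    thus ?thesis using N_big lX unfolding X_def[symmetric] by linarith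
  qed
  have i0: "\<iota> 0 = 0" by (rule iota0[OF Lsf homL iota_one])
  have ARc: "AR \<in> carrier_mat n n" using Ac by (simp add: AR_def)
  have ARdiag: "\<forall>i<n. AR $$ (i,i) = 1" using Ac Adiag iota_one by (simp add: AR_def)
  have ARut: "upper_triangular AR" using Ac Alow i0 by (auto simp: AR_def upper_triangular_def)
  have TRc: "\<Theta>R \<in> carrier_mat n n" using Tc by (simp add: \<Theta>R_def)
  have Wc: "W e \<in> carrier_mat n n" for e using Wmat_carrier[OF ARc] by (simp add: W_def)
  have eT: "frob_mat p \<Theta>R * AR = \<Theta>R"
  proof -
    have "map_mat \<iota> (frob_mat p \<Theta> * A) = map_mat \<iota> (frob_mat p \<Theta>) * map_mat \<iota> A"
      by (rule iota_mult[OF Lsf homL iota_one]) (use ents_frob[OF Lsf homL iota_one entsT] entsA Ac Tc in auto)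
    also have "map_mat \<iota> (frob_mat p \<Theta>) = frob_mat p \<Theta>R"
      unfolding \<Theta>R_def by (rule iota_frob[OF Lsf homL iota_one entsT])
    finally have "map_mat \<iota> (frob_mat p \<Theta> * A) = frob_mat p \<Theta>R * map_mat \<iota> A" .
    thus ?thesis unfolding Theta_eq AR_def[symmetric] \<Theta>R_def[symmetric] by simp
  qed
  have eW: "frob_mat p (W (N - 1)) * AR = W N"
    using Wmat_step[OF cp pp ARc, of "N - 1"] N1 by (simp add: W_def)
  have detW: "det (W e) = 1" for e using Wmat_det[OF ARc ARut ARdiag p0] by (simp add: W_def)
  have detAR: "det AR = 1"
    using det_upper_triangular[OF ARut ARc] ARdiag ARc by (simp add: prod_list_diag_prod)
  define X where "X = frob_mat p (W N)"
  have Xc: "X \<in> carrier_mat n n" using Wc by (simp add: X_def)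
  have "X * AR = W (Suc N)" unfolding X_def using Wmat_step[OF cp pp ARc, of N] by (simp add: W_def)
  hence "det X = 1" using det_mult[OF Xc ARc] detAR detW by simp
  then obtain Y where Yc: "Y \<in> carrier_mat n n" and XY: "X * Y = 1\<^sub>m n" and YX: "Y * X = 1\<^sub>m n"
    using inv_exists[OF Xc] by auto
  have invX: "inv_mat n X = Y" by (rule inv_mat_eq[OF Xc Yc XY YX])
  define Wp where "Wp = frob_mat p (W (N - 1))"
  have Wpc: "Wp \<in> carrier_mat n n" using Wc by (simp add: Wp_def)
  define M where "M = Y * A * Wp"
  have Mc: "M \<in> carrier_mat n n" using Yc Ac Wpc by (simp add: M_def)
  have SRe: "SR = M - 1\<^sub>m n" unfolding SR_def M_def Wp_def invX[unfolded X_def] ..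
  define Fd where "Fd = frob_mat p \<Delta>R"
  define FtR where "FtR = frob_mat p \<Theta>R"
  define Ft where "Ft = frob_mat p \<Theta>"
  have FtRc: "FtR \<in> carrier_mat n n" using TRc by (simp add: FtR_def)
  have Ftc: "Ft \<in> carrier_mat n n" using Tc by (simp add: Ft_def)
  have WNc: "W N \<in> carrier_mat n n" by (rule Wc)
  have Fde: "Fd = FtR - Ft * X"
    unfolding Fd_def \<Delta>R_def FtR_def Ft_def X_def
    using frob_mat_minus[OF cp pp TRc, of "\<Theta> * W N"] frob_mat_mult[OF cp pp Tc WNc] Tc WNc by simp
  have Fdc: "Fd \<in> carrier_mat n n" using FtRc Ftc Xc Fde by (simp add: minus_carrier_mat)
  have DRe: "DR = Fd - \<Delta>R"
    unfolding DR_def Fd_def by (rule eq_matI) (auto simp: Pmat_def frob_mat_def)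
  have DRc: "\<Delta>R \<in> carrier_mat n n" unfolding \<Delta>R_def using Tc WNc by (simp add: minus_carrier_mat)
  have FT1: "frob_mat p (\<Theta>R - 1\<^sub>m n) = FtR - 1\<^sub>m n"
    unfolding FtR_def using frob_mat_minus[OF cp pp TRc one_carrier_mat] frob_mat_one[OF cp pp] by simp
  have S1: "SR + 1\<^sub>m n = M" unfolding SRe by (rule eq_matI) (use Mc in auto)
  define MA where "MA = M * AR"
  have MAc: "MA \<in> carrier_mat n n" using Mc ARc by (simp add: MA_def)
  have XM: "X * M = A * Wp"
  proof -
    have YA: "Y * A \<in> carrier_mat n n" using Yc Ac by simp
    have "X * M = (X * (Y * A)) * Wp" unfolding M_def using assoc_mult_mat[OF Xc YA Wpc] by simp
    also have "X * (Y * A) = (X * Y) * A" using assoc_mult_mat[OF Xc Yc Ac] by simp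
    finally have "X * M = ((X * Y) * A) * Wp" .
    thus ?thesis using XY Ac by simp
  qed
  have key1: "Fd * MA = FtR * MA - \<Theta> * W N"
  proof -
    have "Fd * MA = FtR * MA - (Ft * X) * MA"
      unfolding Fde by (rule minus_mult_distrib_mat[OF FtRc _ MAc]) (use Ftc Xc in simp)
    also have "(Ft * X) * MA = Ft * (X * MA)" by (rule assoc_mult_mat[OF Ftc Xc MAc])
    also have "X * MA = (X * M) * AR" unfolding MA_def by (rule assoc_mult_mat[OF Xc Mc ARc, symmetric])
    also have "\<dots> = A * (Wp * AR)" unfolding XM by (rule assoc_mult_mat[OF Ac Wpc ARc])
    also have "\<dots> = A * W N" using eW by (simp add: Wp_def)
    also have "Ft * (A * W N) = (Ft * A) * W N" by (rule assoc_mult_mat[OF Ftc Ac WNc, symmetric])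
    also have "Ft * A = \<Theta>" using Theta_eq by (simp add: Ft_def)
    finally show ?thesis .
  qed
  have key0: "Fd * (1\<^sub>m n - (SR + 1\<^sub>m n) * AR) = Fd - Fd * MA"
    unfolding S1 MA_def[symmetric] using mult_minus_distrib_mat[OF Fdc one_carrier_mat MAc] Fdc by simp
  have key2: "frob_mat p (\<Theta>R - 1\<^sub>m n) * SR * AR = FtR * MA - \<Theta>R - MA + AR"
  proof -
    have "frob_mat p (\<Theta>R - 1\<^sub>m n) * SR * AR = (FtR - 1\<^sub>m n) * ((M - 1\<^sub>m n) * AR)"
      unfolding FT1 SRe
      by (rule assoc_mult_mat) (use FtRc Mc ARc in \<open>auto simp: minus_carrier_mat\<close>)
    also have "(M - 1\<^sub>m n) * AR = MA - AR"
      unfolding MA_def using minus_mult_distrib_mat[OF Mc one_carrier_mat ARc] ARc by simp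
    also have "(FtR - 1\<^sub>m n) * (MA - AR) = FtR * (MA - AR) - (MA - AR)"
      using minus_mult_distrib_mat[OF FtRc one_carrier_mat, of "MA - AR" n] MAc ARc
      by (simp add: minus_carrier_mat)
    also have "FtR * (MA - AR) = FtR * MA - \<Theta>R"
      using mult_minus_distrib_mat[OF FtRc MAc ARc] eT by (simp add: FtR_def)
    finally show ?thesis
      by (rule trans) (rule eq_matI, use FtRc MAc ARc TRc in auto)
  qed
  have key3: "SR * (AR - 1\<^sub>m n) = MA - M - AR + 1\<^sub>m n"
  proof -
    have "SR * (AR - 1\<^sub>m n) = (M - 1\<^sub>m n) * (AR - 1\<^sub>m n)" unfolding SRe ..
    also have "\<dots> = M * (AR - 1\<^sub>m n) - (AR - 1\<^sub>m n)"
      using minus_mult_distrib_mat[OF Mc one_carrier_mat, of "AR - 1\<^sub>m n" n] ARc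
      by (simp add: minus_carrier_mat)
    also have "M * (AR - 1\<^sub>m n) = MA - M"
      using mult_minus_distrib_mat[OF Mc ARc one_carrier_mat] Mc by (simp add: MA_def)
    finally show ?thesis
      by (rule trans) (rule eq_matI, use Mc MAc ARc in auto)
  qed
  define TW where "TW = \<Theta> * W N"
  define FM where "FM = FtR * MA"
  have TWc: "TW \<in> carrier_mat n n" using Tc WNc by (simp add: TW_def)
  have FMc: "FM \<in> carrier_mat n n" using FtRc MAc by (simp add: FM_def)
  have DR2: "\<Delta>R = \<Theta>R - TW" unfolding \<Delta>R_def TW_def ..
  show ?thesis
    unfolding Fd_def[symmetric] unfolding key0 unfolding key2 unfolding key3 unfolding key1
    unfolding DRe unfolding SRe unfolding DR2 unfolding TW_def[symmetric] unfolding FM_def[symmetric]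
    by (rule eq_matI) (use Fdc TWc FMc Mc MAc ARc TRc in \<open>auto simp: carrier_matD\<close>)

qed

end
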